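(* Let $(X,* )$ be a commutative hypergroup and let $(T_k)_{k\ge1}$ be a sequence of hypergroup automorphisms of $X$ which converges pointwise to a continuous map $T:X\to X$ such that $T(X)$ is closed in $X$. Then $T(X)$ is a subhypergroup of $X$ and $T(\delta_x*\delta_{\bar y})=\delta_{T(x)}*\delta_{\overline{T(y)}}$ for all $x,y\in X$, i.e. $T$ is a hypergroup homomorphism from $X$ onto $T(X)$.
   Context: A hypergroup $(X,* )$ is a locally compact Hausdorff space $X$ with a bilinear, associative, weakly continuous, probability preserving convolution $*$ on the bounded regular Borel measures $M_b(X)$ with $\mathrm{supp}(\delta_x*\delta_y)$ compact, an identity $e$ and a continuous involution $x\mapsto\bar x$ with $e\in\mathrm{supp}(\delta_x*\delta_y)\iff x=\bar y$ and $\delta_{\bar x}*\delta_{\bar y}=(\delta_y*\delta_x)^-$. A closed set $H\subset X$ is a subhypergroup if $\bar x\in H$ and $\mathrm{supp}(\delta_x*\delta_y)\subset H$ for all $x,y\in H$. A continuous map $T:X\to Y$ between hypergroups is a hypergroup homomorphism if $T(\delta_x*\delta_{\bar y})=\delta_{T(x)}*\delta_{\overline{T(y)}}$ for all $x,y$, where $T$ acts on measures by taking image measures; an automorphism is a homomorphism $X\to X$ which is a homeomorphism with homomorphic inverse. *)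

theory Defs
  imports "HOL-Analysis.Analysis" "HOL-Probability.Probability"
begin

definition msupp :: "'a::topological_space measure \<Rightarrow> 'a set" where
  "msupp \<mu> = {x. \<forall>U. open U \<longrightarrow> x \<in> U \<longrightarrow> emeasure \<mu> U > 0}"

definition regular_borel_prob :: "'a::topological_space measure \<Rightarrow> bool" where
  "regular_borel_prob \<mu> \<longleftrightarrow> prob_space \<mu> \<and> sets \<mu> = sets borel \<and>
     (\<forall>B \<in> sets borel. emeasure \<mu> B = (SUP K \<in> {K. compact K \<and> K \<subseteq> B}. emeasure \<mu> K))"

definition bcont :: "('a::topological_space \<Rightarrow> real) \<Rightarrow> bool" where
  "bcont f \<longleftrightarrow> continuous_on UNIV f \<and> bounded (range f)"

text \<open>The convolution is given on point masses: conv x y = \<delta>_x * \<delta>_y.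
  Its bilinear, weakly continuous extension to M_b(X) is determined by these values;
  associativity and weak continuity are stated via bounded continuous test functions.\<close>
definition hypergroup ::
  "('a::t2_space \<Rightarrow> 'a \<Rightarrow> 'a measure) \<Rightarrow> 'a \<Rightarrow> ('a \<Rightarrow> 'a) \<Rightarrow> bool" where
  "hypergroup conv e iv \<longleftrightarrow>
     locally_compact_space (euclidean :: 'a topology) \<and>
     (\<forall>x y. regular_borel_prob (conv x y)) \<and>
     (\<forall>x y. compact (msupp (conv x y))) \<and>
     (\<forall>f. bcont f \<longrightarrow> continuous_on UNIV (\<lambda>(x,y). integral\<^sup>L (conv x y) f)) \<and>
     (\<forall>f x y z. bcont f \<longrightarrow>
        integral\<^sup>L (conv x y) (\<lambda>w. integral\<^sup>L (conv w z) f)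
      = integral\<^sup>L (conv y z) (\<lambda>u. integral\<^sup>L (conv x u) f)) \<and>
     (\<forall>x. conv e x = return borel x \<and> conv x e = return borel x) \<and>
     continuous_on UNIV iv \<and> (\<forall>x. iv (iv x) = x) \<and>
     (\<forall>x y. e \<in> msupp (conv x y) \<longleftrightarrow> x = iv y) \<and>
     (\<forall>x y. conv (iv x) (iv y) = distr (conv y x) borel iv)"

definition comm_hypergroup ::
  "('a::t2_space \<Rightarrow> 'a \<Rightarrow> 'a measure) \<Rightarrow> 'a \<Rightarrow> ('a \<Rightarrow> 'a) \<Rightarrow> bool" where
  "comm_hypergroup conv e iv \<longleftrightarrow> hypergroup conv e iv \<and> (\<forall>x y. conv x y = conv y x)"

definition subhypergroup ::
  "('a::t2_space \<Rightarrow> 'a \<Rightarrow> 'a measure) \<Rightarrow> ('a \<Rightarrow> 'a) \<Rightarrow> 'a set \<Rightarrow> bool" where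
  "subhypergroup conv iv H \<longleftrightarrow> closed H \<and>
     (\<forall>x \<in> H. iv x \<in> H) \<and> (\<forall>x \<in> H. \<forall>y \<in> H. msupp (conv x y) \<subseteq> H)"

definition hg_hom ::
  "('a::t2_space \<Rightarrow> 'a \<Rightarrow> 'a measure) \<Rightarrow> ('a \<Rightarrow> 'a) \<Rightarrow> ('a \<Rightarrow> 'a) \<Rightarrow> bool" where
  "hg_hom conv iv T \<longleftrightarrow> continuous_on UNIV T \<and>
     (\<forall>x y. distr (conv x (iv y)) borel T = conv (T x) (iv (T y)))"

definition hg_aut ::
  "('a::t2_space \<Rightarrow> 'a \<Rightarrow> 'a measure) \<Rightarrow> ('a \<Rightarrow> 'a) \<Rightarrow> ('a \<Rightarrow> 'a) \<Rightarrow> bool" where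
  "hg_aut conv iv T \<longleftrightarrow> hg_hom conv iv T \<and>
     (\<exists>S. homeomorphism UNIV UNIV T S \<and> hg_hom conv iv S)"

end

theory Submission
  imports Defs
begin

lemma hausdorff_t2: "Hausdorff_space (euclidean :: 'a::t2_space topology)"
  unfolding Hausdorff_space_def by (metis disjnt_def hausdorff open_openin topspace_euclidean UNIV_I)

lemma urysohn_lc:
  fixes K C :: "'a::t2_space set"
  assumes "locally_compact_space (euclidean :: 'a topology)" "compact K" "closed C" "K \<inter> C = {}"
  shows "\<exists>f::'a\<Rightarrow>real. bcont f \<and> (\<forall>x. 0 \<le> f x \<and> f x \<le> 1) \<and> (\<forall>x\<in>K. f x = 1) \<and> (\<forall>x\<in>C. f x = 0)"
proof -
  have cr: "completely_regular_space (euclidean :: 'a topology)"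
    using locally_compact_regular_imp_completely_regular_space assms(1) hausdorff_t2 by blast
  obtain f where f: "continuous_map euclidean (subtopology euclidean {0::real..1}) f" "f ` C \<subseteq> {0}" "f ` K \<subseteq> {1}"
  proof -
    have "compactin euclidean K" using assms(2) by simp
    moreover have "closedin euclidean C" using assms(3) by simp
    moreover have "disjnt K C" using assms(4) by (simp add: disjnt_def)
    ultimately show ?thesis
      using Urysohn_completely_regular_compact_closed[of 0 1 euclidean K C] cr that by auto
  qed
  have rng: "\<forall>x. 0 \<le> f x \<and> f x \<le> 1" using f(1) by (auto simp: continuous_map_in_subtopology)
  have "continuous_on UNIV f" using f(1)
    by (simp add: continuous_map_in_subtopology continuous_map_iff_continuous)
  moreover have "bounded (range f)" using rng
    by (metis bounded_closed_interval bounded_subset image_subset_iff atLeastAtMost_iff)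
  ultimately show ?thesis using f rng unfolding bcont_def by (intro exI[of _ f]) auto
qed
lemma bcont_integrable:
  assumes "finite_measure M" "sets M = sets borel" "bcont f"
  shows "integrable M f"
proof -
  obtain B where B: "\<And>x. norm (f x) \<le> B" using assms(3) unfolding bcont_def
    by (meson bounded_iff rangeI)
  have "f \<in> borel_measurable borel" using assms(3) unfolding bcont_def
    by (simp add: borel_measurable_continuous_onI)
  then have "f \<in> borel_measurable M" by (subst measurable_cong_sets[OF assms(2) refl])
  then show ?thesis using finite_measure.integrable_const_bound[OF assms(1), of f B] B by auto
qed

lemma compact_le:
  fixes M N :: "'a::t2_space measure"
  assumes lc: "locally_compact_space (euclidean :: 'a topology)"
    and N: "regular_borel_prob N" and M: "prob_space M" "sets M = sets borel"
    and eq: "\<And>f. bcont f \<Longrightarrow> integral\<^sup>L M f = integral\<^sup>L N f"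
    and K: "compact K"
  shows "measure M K \<le> measure N K"
proof -
  have Np: "prob_space N" and Ns: "sets N = sets borel"
    and Nreg: "\<And>B. B \<in> sets borel \<Longrightarrow> emeasure N B = (SUP K \<in> {K. compact K \<and> K \<subseteq> B}. emeasure N K)"
    using N unfolding regular_borel_prob_def by auto
  have spN: "space N = UNIV" using sets_eq_imp_space_eq[OF Ns] by simp
  have spM: "space M = UNIV" using sets_eq_imp_space_eq[OF M(2)] by simp
  have Kc: "closed K" using K compact_imp_closed by blast
  have key: "measure M K \<le> 1 - measure N C" if C: "compact C" "C \<subseteq> - K" for C
  proof -
    obtain f :: "'a \<Rightarrow> real" where f: "bcont f" "\<And>x. 0 \<le> f x \<and> f x \<le> 1" "\<And>x. x\<in>K \<Longrightarrow> f x = 1" "\<And>x. x \<in> C \<Longrightarrow> f x = 0"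
      using urysohn_lc[OF lc K compact_imp_closed[OF C(1)]] C by blast
    have fm: "finite_measure M" "finite_measure N" using M(1) Np by (auto simp: prob_space_def)
    have iM: "integrable M f" and iN: "integrable N f"
      using bcont_integrable fm M(2) Ns f(1) by blast+
    have KM: "K \<in> sets M" using M(2) Kc by simp
    have CN: "- C \<in> sets N" using Ns compact_imp_closed[OF C(1)] by auto
    have iK: "integrable M (indicator K :: 'a \<Rightarrow> real)"
      using finite_measure.emeasure_finite[OF fm(1), of K] KM by (simp add: less_top)
    have iC: "integrable N (indicator (- C) :: 'a \<Rightarrow> real)"
      using finite_measure.emeasure_finite[OF fm(2), of "- C"] CN by (simp add: less_top)
    have "measure M K = integral\<^sup>L M (indicator K)" using spM by simp
    also have "\<dots> \<le> integral\<^sup>L M f"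
      apply (rule integral_mono)
      using iK iM f by (auto simp: indicator_def)
    also have "\<dots> = integral\<^sup>L N f" using eq f(1) by simp
    also have "\<dots> \<le> integral\<^sup>L N (indicator (- C))"
      apply (rule integral_mono)
      using iC iN f by (auto simp: indicator_def)
    also have "\<dots> = measure N (- C)" using spN by simp
    also have "\<dots> = 1 - measure N C"
      using prob_space.prob_compl[OF Np, of C] spN compact_imp_closed[OF C(1)] Ns
      by (simp add: Compl_eq_Diff_UNIV)
    finally show ?thesis .
  qed
  have "emeasure N (- K) \<le> ennreal (1 - measure M K)"
    unfolding Nreg[OF borel_open[OF open_Compl[OF Kc]]]
  proof (rule SUP_least)
    fix C assume "C \<in> {K'. compact K' \<and> K' \<subseteq> - K}"
    then have C: "compact C" "C \<subseteq> - K" by auto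
    have "emeasure N C = ennreal (measure N C)"
      using Np by (simp add: finite_measure.emeasure_eq_measure prob_space_def)
    also have "\<dots> \<le> ennreal (1 - measure M K)" using key[OF C] by (intro ennreal_leI) simp
    finally show "emeasure N C \<le> ennreal (1 - measure M K)" .
  qed
  moreover have "emeasure N (- K) = ennreal (measure N (- K))"
    using Np by (simp add: finite_measure.emeasure_eq_measure prob_space_def)
  moreover have "measure M K \<le> 1" using prob_space.prob_le_1[OF M(1)] by simp
  ultimately have "measure N (- K) \<le> 1 - measure M K"
    by (simp add: ennreal_le_iff)
  moreover have "measure N (- K) = 1 - measure N K"
    using prob_space.prob_compl[OF Np, of K] spN Kc Ns by (simp add: Compl_eq_Diff_UNIV)
  ultimately show ?thesis by simp
qed
lemma cont_meas:
  assumes "continuous_on UNIV T" "sets M = sets borel"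
  shows "T \<in> measurable M borel"
  by (subst measurable_cong_sets[OF assms(2) refl]) (rule borel_measurable_continuous_onI[OF assms(1)])

lemma distr_eq:
  fixes T :: "'a::t2_space \<Rightarrow> 'a"
  assumes lc: "locally_compact_space (euclidean :: 'a topology)"
    and mu: "regular_borel_prob \<mu>" and nu: "regular_borel_prob \<nu>"
    and Tc: "continuous_on UNIV T"
    and eq: "\<And>f. bcont f \<Longrightarrow> integral\<^sup>L (distr \<mu> borel T) f = integral\<^sup>L \<nu> f"
  shows "distr \<mu> borel T = \<nu>"
proof -
  have mup: "prob_space \<mu>" and mus: "sets \<mu> = sets borel"
    and mureg: "\<And>B. B \<in> sets borel \<Longrightarrow> emeasure \<mu> B = (SUP K \<in> {K. compact K \<and> K \<subseteq> B}. emeasure \<mu> K)"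
    using mu unfolding regular_borel_prob_def by auto
  have nup: "prob_space \<nu>" and nus: "sets \<nu> = sets borel"
    using nu unfolding regular_borel_prob_def by auto
  have Tm: "T \<in> measurable \<mu> borel" using cont_meas[OF Tc mus] .
  define D where "D = distr \<mu> borel T"
  have Dp: "prob_space D" unfolding D_def using prob_space.prob_space_distr[OF mup Tm] .
  have Ds: "sets D = sets borel" unfolding D_def by simp
  have spmu: "space \<mu> = UNIV" using sets_eq_imp_space_eq[OF mus] by simp
  have cle: "emeasure D K \<le> emeasure \<nu> K" if "compact K" for K
  proof -
    have "measure D K \<le> measure \<nu> K"
      by (rule compact_le[OF lc nu Dp Ds _ that]) (use eq in \<open>simp add: D_def\<close>)
    then show ?thesis using Dp nup
      by (simp add: finite_measure.emeasure_eq_measure prob_space_def)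
  qed
  have le: "emeasure D B \<le> emeasure \<nu> B" if B: "B \<in> sets borel" for B
  proof -
    have TB: "T -` B \<in> sets borel" using Tm B mus measurable_sets by (metis spmu Int_UNIV_right)
    have "emeasure D B = emeasure \<mu> (T -` B)"
      unfolding D_def using emeasure_distr[OF Tm B] spmu by simp
    also have "\<dots> = (SUP K \<in> {K. compact K \<and> K \<subseteq> T -` B}. emeasure \<mu> K)" using mureg[OF TB] .
    also have "\<dots> \<le> emeasure \<nu> B"
    proof (rule SUP_least)
      fix K assume "K \<in> {K. compact K \<and> K \<subseteq> T -` B}"
      then have K: "compact K" "K \<subseteq> T -` B" by auto
      have TK: "compact (T ` K)"
        using compact_continuous_image[OF continuous_on_subset[OF Tc] K(1)] by simp
      have TKb: "T ` K \<in> sets borel" using borel_closed[OF compact_imp_closed[OF TK]] .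
      have "emeasure \<mu> K \<le> emeasure \<mu> (T -` (T ` K))"
      proof -
        have "K \<subseteq> T -` (T ` K)" by blast
        moreover have "T -` (T ` K) \<in> sets \<mu>" using measurable_sets[OF Tm TKb] spmu by simp
        ultimately show ?thesis by (rule emeasure_mono)
      qed
      also have "\<dots> = emeasure D (T ` K)"
        unfolding D_def using emeasure_distr[OF Tm TKb] spmu by simp
      also have "\<dots> \<le> emeasure \<nu> (T ` K)" using cle[OF TK] .
      also have "\<dots> \<le> emeasure \<nu> B"
        by (rule emeasure_mono) (use K B nus in auto)
      finally show "emeasure \<mu> K \<le> emeasure \<nu> B" .
    qed
    finally show ?thesis .
  qed
  have mle: "measure D B \<le> measure \<nu> B" if "B \<in> sets borel" for B
    using le[OF that] Dp nup
    by (simp add: finite_measure.emeasure_eq_measure prob_space_def)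
  have spD: "space D = UNIV" using sets_eq_imp_space_eq[OF Ds] by simp
  have spnu: "space \<nu> = UNIV" using sets_eq_imp_space_eq[OF nus] by simp
  have meq: "measure D B = measure \<nu> B" if B: "B \<in> sets borel" for B
  proof -
    have "- B \<in> sets borel" using B by (metis sets.compl_sets space_borel Compl_eq_Diff_UNIV)
    then have "measure D (- B) \<le> measure \<nu> (- B)" by (rule mle)
    moreover have "measure D (- B) = 1 - measure D B"
      using prob_space.prob_compl[OF Dp, of B] spD B Ds by (simp add: Compl_eq_Diff_UNIV)
    moreover have "measure \<nu> (- B) = 1 - measure \<nu> B"
      using prob_space.prob_compl[OF nup, of B] spnu B nus by (simp add: Compl_eq_Diff_UNIV)
    ultimately show ?thesis using mle[OF B] by simp
  qed
  show ?thesis unfolding D_def[symmetric]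
  proof (rule measure_eqI)
    show "sets D = sets \<nu>" using Ds nus by simp
    fix A assume "A \<in> sets D"
    then show "emeasure D A = emeasure \<nu> A" using meq[of A] Ds Dp nup
      by (simp add: finite_measure.emeasure_eq_measure prob_space_def)
  qed
qed
lemma msupp_return: "msupp (return borel (a::'a::t2_space)) = {a}"
proof -
  have em: "emeasure (return borel a) U = indicator U a" if "open U" for U
    by (rule emeasure_return) (rule borel_open[OF that])
  have "x \<in> msupp (return borel a) \<longleftrightarrow> x = a" for x
  proof -
    have "x \<in> msupp (return borel a) \<longleftrightarrow> (\<forall>U. open U \<longrightarrow> x \<in> U \<longrightarrow> a \<in> U)"
      unfolding msupp_def using em by (auto simp: indicator_def)
    also have "\<dots> \<longleftrightarrow> x = a" using separation_t1[of x a] by blast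
    finally show ?thesis .
  qed
  then show ?thesis by blast
qed

lemma return_inj:
  assumes h: "return borel (a::'a::t2_space) = return borel b" shows "a = b"
proof -
  have "{a} = {b}" using msupp_return[of a] msupp_return[of b] h by metis
  then show ?thesis by blast
qed

lemma msupp_distr_sub:
  fixes T :: "'a::t2_space \<Rightarrow> 'a"
  assumes "sets \<mu> = sets borel" "continuous_on UNIV T" "closed (range T)"
  shows "msupp (distr \<mu> borel T) \<subseteq> range T"
proof
  fix z assume z: "z \<in> msupp (distr \<mu> borel T)"
  show "z \<in> range T"
  proof (rule ccontr)
    assume nz: "z \<notin> range T"
    have o: "open (- range T)" using open_Compl[OF assms(3)] .
    have "emeasure (distr \<mu> borel T) (- range T) = emeasure \<mu> (T -` (- range T) \<inter> space \<mu>)"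
      by (rule emeasure_distr[OF cont_meas[OF assms(2,1)]]) (rule borel_open[OF o])
    also have "T -` (- range T) \<inter> space \<mu> = {}" by blast
    finally have "emeasure (distr \<mu> borel T) (- range T) = 0" by (simp only: emeasure_empty)
    moreover have "0 < emeasure (distr \<mu> borel T) (- range T)"
      using z o nz unfolding msupp_def by blast
    ultimately show False by simp
  qed
qed

theorem mainTheorem7:
  fixes conv :: "'a::t2_space \<Rightarrow> 'a \<Rightarrow> 'a measure"
    and e :: 'a and iv :: "'a \<Rightarrow> 'a"
    and Ts :: "nat \<Rightarrow> 'a \<Rightarrow> 'a" and T :: "'a \<Rightarrow> 'a"
  assumes "comm_hypergroup conv e iv"
    and "\<And>k. hg_aut conv iv (Ts k)"
    and "\<And>x. (\<lambda>k. Ts k x) \<longlonglongrightarrow> T x"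
    and "continuous_on UNIV T"
    and "closed (range T)"
  shows "subhypergroup conv iv (range T) \<and>
         (\<forall>x y. distr (conv x (iv y)) borel T = conv (T x) (iv (T y)))"
proof -
  have H: "hypergroup conv e iv" using assms(1) unfolding comm_hypergroup_def by blast
  note H' = H[unfolded hypergroup_def]
  have lc: "locally_compact_space (euclidean :: 'a topology)" using H' by blast
  have reg: "\<And>x y. regular_borel_prob (conv x y)" using H' by blast
  have wc: "\<And>f. bcont f \<Longrightarrow> continuous_on UNIV (\<lambda>(x,y). integral\<^sup>L (conv x y) f)" using H' by blast
  have unit: "\<And>x. conv e x = return borel x" using H' by blast
  have ivc: "continuous_on UNIV iv" using H' by blast
  have ivv: "\<And>x. iv (iv x) = x" using H' by blast
  have supp: "\<And>x y. e \<in> msupp (conv x y) \<longleftrightarrow> x = iv y" using H' by blast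
  have Tsc: "\<And>k. continuous_on UNIV (Ts k)"
    and Tsh: "\<And>k x y. distr (conv x (iv y)) borel (Ts k) = conv (Ts k x) (iv (Ts k y))"
    using assms(2) unfolding hg_aut_def hg_hom_def by auto
  have Tc: "continuous_on UNIV T" by fact
  have sets_conv: "\<And>x y. sets (conv x y) = sets borel"
    and prob_conv: "\<And>x y. prob_space (conv x y)"
    using reg unfolding regular_borel_prob_def by auto
  have hom: "distr (conv x (iv y)) borel T = conv (T x) (iv (T y))" for x y
  proof (rule distr_eq[OF lc reg reg Tc])
    fix f :: "'a \<Rightarrow> real" assume f: "bcont f"
    define \<mu> where "\<mu> = conv x (iv y)"
    have fc: "continuous_on UNIV f" using f unfolding bcont_def by simp
    obtain B where B: "\<And>z. norm (f z) \<le> B" using f unfolding bcont_def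
      by (meson bounded_iff rangeI)
    have fm: "f \<in> borel_measurable borel" using borel_measurable_continuous_onI[OF fc] .
    have fmu: "f \<in> borel_measurable \<mu>"
      unfolding \<mu>_def by (subst measurable_cong_sets[OF sets_conv refl]) (rule fm)
    have isf: "isCont f z" for z using fc continuous_on_eq_continuous_at open_UNIV by blast
    have isiv: "isCont iv z" for z using ivc continuous_on_eq_continuous_at open_UNIV by blast
    have A: "(\<lambda>k. integral\<^sup>L (distr \<mu> borel (Ts k)) f) \<longlonglongrightarrow> integral\<^sup>L (distr \<mu> borel T) f"
    proof -
      have eq1: "integral\<^sup>L (distr \<mu> borel (Ts k)) f = integral\<^sup>L \<mu> (\<lambda>z. f (Ts k z))" for k
        by (rule integral_distr[OF cont_meas[OF Tsc] fm]) (simp add: \<mu>_def sets_conv)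
      have eq2: "integral\<^sup>L (distr \<mu> borel T) f = integral\<^sup>L \<mu> (\<lambda>z. f (T z))"
        by (rule integral_distr[OF cont_meas[OF Tc] fm]) (simp add: \<mu>_def sets_conv)
      have "(\<lambda>k. integral\<^sup>L \<mu> (\<lambda>z. f (Ts k z))) \<longlonglongrightarrow> integral\<^sup>L \<mu> (\<lambda>z. f (T z))"
      proof (rule integral_dominated_convergence[where w="\<lambda>_. B"])
        show "(\<lambda>z. f (T z)) \<in> borel_measurable \<mu>"
          using measurable_comp[OF cont_meas[OF Tc] fm, of \<mu>] sets_conv unfolding \<mu>_def
          by (simp add: o_def)
        show "(\<lambda>z. f (Ts k z)) \<in> borel_measurable \<mu>" for k
          using measurable_comp[OF cont_meas[OF Tsc] fm, of \<mu>] sets_conv unfolding \<mu>_def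
          by (simp add: o_def)
        show "integrable \<mu> (\<lambda>_. B)"
          by (rule bcont_integrable) (use prob_conv in \<open>auto simp: \<mu>_def sets_conv prob_space_def bcont_def\<close>)
        show "AE z in \<mu>. (\<lambda>k. f (Ts k z)) \<longlonglongrightarrow> f (T z)"
          by (rule AE_I2) (rule isCont_tendsto_compose[OF isf assms(3)])
        show "AE z in \<mu>. norm (f (Ts k z)) \<le> B" for k
          using B by simp
      qed
      then show ?thesis unfolding eq1 eq2 .
    qed
    have Bl: "(\<lambda>k. integral\<^sup>L (conv (Ts k x) (iv (Ts k y))) f) \<longlonglongrightarrow> integral\<^sup>L (conv (T x) (iv (T y))) f"
    proof -
      have t: "(\<lambda>k. (Ts k x, iv (Ts k y))) \<longlonglongrightarrow> (T x, iv (T y))"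
        by (intro tendsto_Pair assms(3) isCont_tendsto_compose[OF isiv])
      from continuous_on_tendsto_compose[OF wc[OF f] t] show ?thesis by simp
    qed
    have "(\<lambda>k. integral\<^sup>L (distr \<mu> borel (Ts k)) f) = (\<lambda>k. integral\<^sup>L (conv (Ts k x) (iv (Ts k y))) f)"
      unfolding \<mu>_def Tsh ..
    with A Bl show "integral\<^sup>L (distr (conv x (iv y)) borel T) f = integral\<^sup>L (conv (T x) (iv (T y))) f"
      unfolding \<mu>_def using LIMSEQ_unique by metis
  qed
  have ive: "iv e = e"
    using supp[of e e] unit[of e] msupp_return[of e] by simp
  have Te: "T e = e"
  proof -
    have "distr (conv e (iv e)) borel T = return borel (T e)"
      using ive unit[of e] distr_return[OF cont_meas[OF Tc], of borel e] by simp
    then have "conv (T e) (iv (T e)) = return borel (T e)" using hom[of e e] by simp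
    moreover have "e \<in> msupp (conv (T e) (iv (T e)))" using supp ivv by simp
    ultimately show ?thesis using msupp_return[of "T e"] by simp
  qed
  have Tiv: "T (iv z) = iv (T z)" for z
  proof -
    have "distr (conv e (iv z)) borel T = return borel (T (iv z))"
      using unit distr_return[OF cont_meas[OF Tc], of borel "iv z"] by simp
    moreover have "conv (T e) (iv (T z)) = return borel (iv (T z))" using Te unit by simp
    ultimately show ?thesis using hom[of e z] return_inj by metis
  qed
  have sub: "subhypergroup conv iv (range T)"
    unfolding subhypergroup_def
  proof (intro conjI ballI)
    show "closed (range T)" by fact
    fix a assume "a \<in> range T"
    then obtain u where u: "a = T u" by blast
    show "iv a \<in> range T" using Tiv[of u] u by (metis rangeI)
    fix b assume "b \<in> range T"
    then obtain v where v: "b = T v" by blast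
    have "conv a b = conv (T u) (iv (T (iv v)))" using u v Tiv ivv by simp
    also have "\<dots> = distr (conv u (iv (iv v))) borel T" using hom by simp
    finally show "msupp (conv a b) \<subseteq> range T"
      using msupp_distr_sub[OF sets_conv Tc assms(5)] by simp
  qed
  show ?thesis using sub hom by blast
qed
end
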